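(* Let $R$ be a commutative ring which is free as an abelian group with $\mathbb{Z}$-basis $V$, let $p$ be a prime, $n\ge2$ and $r\ge1$. Then there is a group epimorphism $\varphi_r:\Gamma(SL_n(R),p^r)\to\mathfrak{sl}_n(\mathbb{F}_p[V])$ (target regarded as an additive group) whose kernel is $\Gamma(SL_n(R),p^{r+1})$. Consequently $\Gamma(SL_n(R),p^r)/\Gamma(SL_n(R),p^{r+1})\cong\mathfrak{sl}_n(\mathbb{F}_p[V])$ as groups.
   Context: $\Gamma(SL_n(R),p^m)=\ker\big(SL_n(R)\to SL_n(R\otimes_{\mathbb{Z}}\mathbb{Z}/p^m)\big)$. $\mathbb{F}_p[V]=R\otimes_{\mathbb{Z}}\mathbb{Z}/p=R/pR$, and $\mathfrak{sl}_n(\mathbb{F}_p[V])$ is the set of traceless $n\times n$ matrices over $R/pR$. *)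

theory Defs
  imports "HOL-Analysis.Determinants" "HOL-Algebra.QuotRing" "HOL-Computational_Algebra.Primes"
begin

text \<open>R is free as an abelian group with Z-basis V: every element is uniquely a
  finitely supported Z-linear combination of elements of V.\<close>
definition free_Z_basis :: "'a::comm_ring_1 set \<Rightarrow> bool" where
  "free_Z_basis V \<longleftrightarrow>
     (\<forall>x::'a. \<exists>!c::'a \<Rightarrow> int. finite {v. c v \<noteq> 0} \<and> (\<forall>v. c v \<noteq> 0 \<longrightarrow> v \<in> V) \<and>
        x = (\<Sum>v\<in>{v. c v \<noteq> 0}. of_int (c v) * v))"

text \<open>The ring R (a type of class comm_ring_1) as a HOL-Algebra ring record.\<close>
definition ring_of_type :: "'a::comm_ring_1 ring" where
  "ring_of_type = \<lparr>carrier = UNIV, mult = (*), one = 1, zero = 0, add = (+)\<rparr>"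

text \<open>F_p[V] = R/pR\<close>
definition mod_p_ring :: "nat \<Rightarrow> ('a::comm_ring_1) set ring" where
  "mod_p_ring p = ring_of_type Quot {of_nat p * y | y. True}"

text \<open>Congruence subgroup Gamma(SL_n(R), m): det = 1 and A = I mod m R (entrywise).\<close>
definition congruence_subgroup :: "nat \<Rightarrow> ('a::comm_ring_1 ^'n::finite^'n) monoid" where
  "congruence_subgroup m =
     \<lparr>carrier = {A. det A = 1 \<and> (\<forall>i j. \<exists>b. (A - mat 1) $ i $ j = of_nat m * b)},
      mult = (**), one = mat 1\<rparr>"

text \<open>Additive group of traceless n x n matrices over a ring S.\<close>
definition sl_add_group :: "('b, 'c) ring_scheme \<Rightarrow> ('n::finite \<Rightarrow> 'n \<Rightarrow> 'b) monoid" where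
  "sl_add_group S =
     \<lparr>carrier = {M. (\<forall>i j. M i j \<in> carrier S) \<and> finsum S (\<lambda>i. M i i) UNIV = \<zero>\<^bsub>S\<^esub>},
      mult = (\<lambda>M N i j. M i j \<oplus>\<^bsub>S\<^esub> N i j), one = (\<lambda>i j. \<zero>\<^bsub>S\<^esub>)\<rparr>"

end

theory Submission imports Defs begin

lemma cring_rot: "cring (ring_of_type :: 'a::comm_ring_1 ring)"
proof (rule cringI)
  show "abelian_group (ring_of_type :: 'a::comm_ring_1 ring)"
    by (rule abelian_groupI) (simp_all add: ring_of_type_def add.assoc add.commute, 
         metis add.commute ab_left_minus)
  show "comm_monoid (ring_of_type :: 'a::comm_ring_1 ring)"
    by (rule comm_monoidI) (simp_all add: ring_of_type_def mult.assoc mult.commute)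
qed (simp add: ring_of_type_def distrib_right)

definition pI :: "nat \<Rightarrow> 'a::comm_ring_1 set" where
  "pI p = {of_nat p * y | y. True}"

lemma ideal_pI: "ideal (pI p) (ring_of_type :: 'a::comm_ring_1 ring)"
proof -
  interpret cring "ring_of_type :: 'a ring" by (rule cring_rot)
  show ?thesis
  proof (rule idealI)
    show "ring (ring_of_type :: 'a ring)" by (rule ring_axioms)
    show "subgroup (pI p) (add_monoid (ring_of_type :: 'a ring))"
    proof (rule group.subgroupI[OF add.is_group])
      show "pI p \<subseteq> carrier (add_monoid (ring_of_type :: 'a ring))" by (simp add: ring_of_type_def)
      show "pI p \<noteq> {}" by (auto simp: pI_def)
      fix a b :: 'a assume "a \<in> pI p" "b \<in> pI p"
      then obtain y z where a: "a = of_nat p * y" and b: "b = of_nat p * z" by (auto simp: pI_def)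
      have "inv\<^bsub>add_monoid (ring_of_type :: 'a ring)\<^esub> a = - a"
        by (metis UNIV_I a_inv_def add.l_inv_ex ring_of_type_def add.inv_equality left_minus monoid.select_convs partial_object.select_convs ring.simps)
      then show "inv\<^bsub>add_monoid (ring_of_type :: 'a ring)\<^esub> a \<in> pI p"
        by (auto simp: pI_def a intro!: exI[of _ "-y"])
      show "a \<otimes>\<^bsub>add_monoid (ring_of_type :: 'a ring)\<^esub> b \<in> pI p"
        by (auto simp: pI_def a b ring_of_type_def intro!: exI[of _ "y+z"] simp: distrib_left)
    qed
  next
    fix a x :: 'a assume "a \<in> pI (p) " "x \<in> carrier (ring_of_type :: 'a ring)"
    then obtain y where a: "a = of_nat p * y" by (auto simp: pI_def)
    show "x \<otimes>\<^bsub>ring_of_type\<^esub> a \<in> pI p"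
      by (auto simp: pI_def a ring_of_type_def intro!: exI[of _ "x*y"] simp: algebra_simps)
    show "a \<otimes>\<^bsub>ring_of_type\<^esub> x \<in> pI p"
      by (auto simp: pI_def a ring_of_type_def intro!: exI[of _ "x*y"] simp: algebra_simps)
  qed
qed

lemma rot_simps [simp]:
  "carrier (ring_of_type :: 'a::comm_ring_1 ring) = UNIV"
  "add (ring_of_type :: 'a::comm_ring_1 ring) = (+)"
  "mult (ring_of_type :: 'a::comm_ring_1 ring) = (*)"
  "zero (ring_of_type :: 'a::comm_ring_1 ring) = 0"
  "one (ring_of_type :: 'a::comm_ring_1 ring) = 1"
  by (simp_all add: ring_of_type_def)

lemma finsum_rot: "finite A \<Longrightarrow> finsum (ring_of_type :: 'a::comm_ring_1 ring) f A = sum f A"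
proof (induction A rule: finite_induct)
  case empty
  interpret cring "ring_of_type :: 'a ring" by (rule cring_rot)
  show ?case by simp
next
  case (insert x F)
  interpret cring "ring_of_type :: 'a ring" by (rule cring_rot)
  show ?case using insert by (simp add: finsum_insert)
qed

definition cls :: "nat \<Rightarrow> 'a::comm_ring_1 \<Rightarrow> 'a set" where
  "cls p x = pI p +>\<^bsub>(ring_of_type :: 'a ring)\<^esub> x"

abbreviation QR :: "nat \<Rightarrow> 'a::comm_ring_1 set ring" where
  "QR p \<equiv> (ring_of_type :: 'a ring) Quot (pI p)"

lemma mod_p_ring_eq: "mod_p_ring p = QR p"
  by (simp add: mod_p_ring_def pI_def)

lemma cring_QR: "cring (QR p)"
  by (rule ideal.quotient_is_cring[OF ideal_pI cring_rot])

lemma hom_cls: "ring_hom_cring (ring_of_type :: 'a::comm_ring_1 ring) (QR p) (cls p)"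
proof -
  have "cls p = (+>\<^bsub>(ring_of_type :: 'a ring)\<^esub>) (pI p)" by (simp add: cls_def fun_eq_iff)
  then show ?thesis using ideal.rcos_ring_hom_cring[OF ideal_pI cring_rot] by simp
qed

lemma cls_carrier [simp]: "cls p x \<in> carrier (QR p)"
proof -
  interpret ring_hom_cring "ring_of_type :: 'a::comm_ring_1 ring" "QR p" "cls p" by (rule hom_cls)
  show ?thesis by simp
qed

lemma cls_add: "cls p (x + y) = cls p x \<oplus>\<^bsub>QR p\<^esub> cls p (y::'a::comm_ring_1)"
proof -
  interpret ring_hom_cring "ring_of_type :: 'a::comm_ring_1 ring" "QR p" "cls p" by (rule hom_cls)
  show ?thesis using hom_add[of x y] by simp
qed

lemma zero_QR: "\<zero>\<^bsub>QR p\<^esub> = pI p"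
  by (simp add: FactRing_def)

lemma cls_zero_iff: "cls p x = \<zero>\<^bsub>QR p\<^esub> \<longleftrightarrow> of_nat p dvd (x::'a::comm_ring_1)"
proof -
  interpret cring "ring_of_type :: 'a ring" by (rule cring_rot)
  interpret ideal "pI p" "ring_of_type :: 'a ring" by (rule ideal_pI)
  have "cls p x = pI p \<longleftrightarrow> x \<in> pI p"
    using rcos_const_imp_mem[of x] a_rcos_zero[OF ideal_pI, of x] by (auto simp: cls_def)
  moreover have "x \<in> pI p \<longleftrightarrow> of_nat p dvd x" unfolding pI_def dvd_def by blast
  ultimately show ?thesis by (simp only: zero_QR)
qed

lemma carrier_QR: "carrier (QR p) = range (cls p :: 'a::comm_ring_1 \<Rightarrow> _)"
  by (auto simp add: FactRing_def A_RCOSETS_def' cls_def)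

lemma finsum_cls: "finite A \<Longrightarrow> finsum (QR p) (\<lambda>i. cls p (f i)) A = cls p (sum f A :: 'a::comm_ring_1)"
proof -
  assume A: "finite A"
  interpret ring_hom_cring "ring_of_type :: 'a::comm_ring_1 ring" "QR p" "cls p" by (rule hom_cls)
  show ?thesis using hom_finsum[of f A] A by (simp add: finsum_rot o_def)
qed

lemma ex1_eqD: "\<exists>!x. P x \<Longrightarrow> P a \<Longrightarrow> P b \<Longrightarrow> a = b"
  by blast

lemma torsion_free:
  assumes V: "free_Z_basis (V :: 'a::comm_ring_1 set)" and k: "k > 0" and eq: "of_nat k * x = (0::'a)"
  shows "x = 0"
proof -
  define P where "P = (\<lambda>(y::'a) (c::'a \<Rightarrow> int). finite {v. c v \<noteq> 0} \<and> (\<forall>v. c v \<noteq> 0 \<longrightarrow> v \<in> V) \<and>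
        y = (\<Sum>v\<in>{v. c v \<noteq> 0}. of_int (c v) * v))"
  have ex: "\<And>y. \<exists>!c. P y c" using V unfolding free_Z_basis_def P_def by blast
  obtain c where c: "P x c" using ex by blast
  define c' where "c' = (\<lambda>v. int k * c v)"
  have S: "{v. c' v \<noteq> 0} = {v. c v \<noteq> 0}" using k by (auto simp: c'_def)
  have xs: "x = (\<Sum>v\<in>{v. c v \<noteq> 0}. of_int (c v) * v)" using c by (simp add: P_def)
  have "(\<Sum>v\<in>{v. c' v \<noteq> 0}. of_int (c' v) * v) = (\<Sum>v\<in>{v. c v \<noteq> 0}. of_nat k * (of_int (c v) * v))"
    unfolding S by (simp add: c'_def mult.assoc)
  also have "\<dots> = of_nat k * x" by (simp add: xs sum_distrib_left)
  finally have sum0: "(\<Sum>v\<in>{v. c' v \<noteq> 0}. of_int (c' v) * v) = 0" using eq by simp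
  have nz: "\<And>v. c' v \<noteq> 0 \<longleftrightarrow> c v \<noteq> 0" using k by (simp add: c'_def)
  have "P 0 c'" using c sum0 unfolding P_def nz by simp
  moreover have "P 0 (\<lambda>_. 0)" by (simp add: P_def)
  ultimately have "c' = (\<lambda>_. 0)" using ex1_eqD[OF ex] by blast
  then have "{v. c v \<noteq> 0} = {}" using S by auto
  then show ?thesis using xs by simp
qed

lemma cancel_tf:
  assumes V: "free_Z_basis (V :: 'a::comm_ring_1 set)" and k: "k > 0" and eq: "of_nat k * x = of_nat k * (y::'a)"
  shows "x = y"
  using torsion_free[OF V k, of "x - y"] eq by (simp add: right_diff_distrib)


lemma mat1_entry: "(mat 1 :: 'a::comm_ring_1^'n::finite^'n) $ i $ j = (if i = j then 1 else 0)"
  by (simp add: mat_def)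

definition cof :: "'a::comm_ring_1^'n::finite^'n \<Rightarrow> 'a^'n^'n" where
  "cof A = (\<chi> k j. det ((\<chi> i. if i = j then axis k 1 else row i A) :: 'a^'n^'n))"

lemma row_expand: "(\<Sum>k\<in>UNIV. (A$i$k) *s (axis k 1 :: 'a::comm_ring_1^'n::finite)) = row i A"
  by (simp add: vec_eq_iff row_def axis_def sum_component if_distrib cong: if_cong)

lemma mul_cof: fixes A :: "'a::comm_ring_1^'n::finite^'n"
  shows "(A ** cof A) $ i $ j = (if i = j then det A else 0)"
proof -
  have "(A ** cof A) $ i $ j = (\<Sum>k\<in>UNIV. A$i$k * det ((\<chi> l. if l = j then axis k 1 else row l A) :: 'a^'n^'n))"
    by (simp add: matrix_matrix_mult_def cof_def)
  also have "\<dots> = (\<Sum>k\<in>UNIV. det ((\<chi> l. if l = j then A$i$k *s axis k 1 else row l A) :: 'a^'n^'n))"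
    by (simp add: det_row_mul)
  also have "\<dots> = det ((\<chi> l. if l = j then (\<Sum>k\<in>UNIV. A$i$k *s axis k 1) else row l A) :: 'a^'n^'n)"
    using det_linear_row_sum[of UNIV j "\<lambda>l k. A$i$k *s axis k 1" "\<lambda>l. row l A"] by simp
  also have "\<dots> = det ((\<chi> l. if l = j then row i A else row l A) :: 'a^'n^'n)"
    by (simp only: row_expand)
  also have "\<dots> = (if i = j then det A else 0)"
  proof (cases "i = j")
    case True
    have "((\<chi> l. if l = j then row i A else row l A) :: 'a^'n^'n) = A"
      using True by (simp add: vec_eq_iff row_def)
    then show ?thesis using True by simp
  next
    case False
    show ?thesis using False
      by (simp, intro det_identical_rows[of i j]) (auto simp: row_def vec_eq_iff)
  qed
  finally show ?thesis .
qed

lemma right_inv: "det A = 1 \<Longrightarrow> A ** cof A = mat 1"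
  by (simp add: vec_eq_iff mul_cof mat1_entry)

lemma left_inv_ex: "det (A::'a::comm_ring_1^'n::finite^'n) = 1 \<Longrightarrow> \<exists>B. det B = 1 \<and> B ** A = mat 1"
proof -
  assume d: "det A = 1"
  define B where "B = transpose (cof (transpose A))"
  have "transpose A ** cof (transpose A) = mat 1" using d by (simp add: right_inv)
  then have BA: "B ** A = mat 1"
    by (metis B_def matrix_transpose_mul transpose_mat transpose_transpose)
  then have "det B * det A = 1" by (metis det_I det_mul)
  then show ?thesis using BA d by auto
qed


lemma skol2: assumes "\<forall>i j. \<exists>b. P i j b" shows "\<exists>x. \<forall>i j. P i j (x i j)"
proof (intro exI allI)
  fix i j show "P i j ((\<lambda>i j. SOME b. P i j b) i j)" using assms by (simp add: someI_ex)
qed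

lemma Gamma_iff: "A \<in> carrier (congruence_subgroup m) \<longleftrightarrow>
   det A = 1 \<and> (\<forall>i j. \<exists>b. A$i$j = (if i = j then 1 else 0) + of_nat m * (b::'a::comm_ring_1))"
proof -
  have "\<And>i j b. (A - mat 1)$i$j = of_nat m * b \<longleftrightarrow> A$i$j = (if i = j then 1 else 0) + of_nat m * (b::'a)"
    by (simp add: mat1_entry diff_eq_eq add.commute)
  then show ?thesis by (simp add: congruence_subgroup_def)
qed

lemma Gamma_mult [simp]: "mult (congruence_subgroup m) = (**)" "one (congruence_subgroup m) = mat 1"
  by (simp_all add: congruence_subgroup_def)

lemma Gamma_obtain:
  assumes "A \<in> carrier (congruence_subgroup m)"
  shows "\<exists>x. \<forall>i k. A$i$k = (if i = k then 1 else 0) + of_nat m * (x i k::'a::comm_ring_1)"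
proof -
  from assms have "\<forall>i k. \<exists>b. A$i$k = (if i = k then 1 else 0) + of_nat m * (b::'a)" by (simp add: Gamma_iff)
  then show ?thesis by (rule skol2)
qed

lemma prod_form:
  fixes A B :: "'a::comm_ring_1^'n::finite^'n"
  assumes "\<forall>i k. A$i$k = (if i = k then 1 else 0) + s * x i k"
      and "\<forall>k j. B$k$j = (if k = j then 1 else 0) + s * y k j"
  shows "(A ** B)$i$j = (if i = j then 1 else 0) + s * (x i j + y i j + s * (\<Sum>k\<in>UNIV. x i k * y k j))"
proof -
  have "(A ** B)$i$j = (\<Sum>k\<in>UNIV. ((if i = k then 1 else 0) + s * x i k) * ((if k = j then 1 else 0) + s * y k j))"
    using assms by (simp add: matrix_matrix_mult_def)
  also have "\<dots> = (\<Sum>k\<in>UNIV. (if i = k then 1 else 0) * (if k = j then 1 else 0)) + s * (\<Sum>k\<in>UNIV. (if i = k then 1 else 0) * y k j)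
      + s * (\<Sum>k\<in>UNIV. x i k * (if k = j then 1 else 0)) + s * s * (\<Sum>k\<in>UNIV. x i k * y k j)"
    by (simp add: ring_distribs sum.distrib sum_distrib_left mult.assoc mult.left_commute)
  also have "(\<Sum>k\<in>UNIV. (if i = k then 1 else 0) * (if k = j then 1 else 0)) = (if i = j then (1::'a) else 0)"
    by (simp add: if_distrib[where f="\<lambda>z. z * _"] cong: if_cong)
  also have "(\<Sum>k\<in>UNIV. (if i = k then 1 else 0) * y k j) = y i j"
    by (simp add: if_distrib[where f="\<lambda>z. z * _"] cong: if_cong)
  also have "(\<Sum>k\<in>UNIV. x i k * (if k = j then 1 else 0)) = x i j"
    by (simp add: if_distrib[where f="\<lambda>z. _ * z"] cong: if_cong)
  finally show ?thesis by (simp add: algebra_simps)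
qed

lemma group_Gamma: "group (congruence_subgroup m :: ('a::comm_ring_1^'n::finite^'n) monoid)"
proof (rule groupI)
  fix A B :: "'a^'n^'n"
  assume A: "A \<in> carrier (congruence_subgroup m)" and B: "B \<in> carrier (congruence_subgroup m)"
  from A obtain x where x: "\<forall>i k. A$i$k = (if i = k then 1 else 0) + of_nat m * x i k"
    using Gamma_obtain by blast
  from B obtain y where y: "\<forall>i k. B$i$k = (if i = k then 1 else 0) + of_nat m * y i k"
    using Gamma_obtain by blast
  show "A \<otimes>\<^bsub>congruence_subgroup m\<^esub> B \<in> carrier (congruence_subgroup m)"
  proof -
    have "det A = 1" "det B = 1" using A B unfolding Gamma_iff by blast+
    then have "det (A**B) = 1" by (metis det_mul mult_1_left)
    moreover have "\<forall>i j. \<exists>b. (A**B)$i$j = (if i = j then 1 else 0) + of_nat m * b"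
      by (intro allI exI) (rule prod_form[OF x y])
    ultimately show ?thesis by (simp only: Gamma_mult Gamma_iff) blast
  qed
next
  show "\<one>\<^bsub>congruence_subgroup m\<^esub> \<in> carrier (congruence_subgroup m :: ('a^'n^'n) monoid)"
  proof -
    have "\<forall>i j. (mat 1 :: 'a^'n^'n)$i$j = (if i = j then 1 else 0) + of_nat m * 0" by (simp add: mat1_entry)
    then show ?thesis by (simp only: Gamma_mult Gamma_iff det_I) blast
  qed
next
  fix A B C :: "'a^'n^'n"
  show "A \<otimes>\<^bsub>congruence_subgroup m\<^esub> B \<otimes>\<^bsub>congruence_subgroup m\<^esub> C =
       A \<otimes>\<^bsub>congruence_subgroup m\<^esub> (B \<otimes>\<^bsub>congruence_subgroup m\<^esub> C)"
    by (simp add: matrix_mul_assoc)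
next
  fix A :: "'a^'n^'n"
  show "\<one>\<^bsub>congruence_subgroup m\<^esub> \<otimes>\<^bsub>congruence_subgroup m\<^esub> A = A" by simp
next
  fix A :: "'a^'n^'n"
  assume A: "A \<in> carrier (congruence_subgroup m)"
  from A obtain x where x: "\<forall>i k. A$i$k = (if i = k then 1 else 0) + of_nat m * x i k"
    using Gamma_obtain by blast
  from A have "det A = 1" unfolding Gamma_iff by blast
  then obtain B where B: "det B = 1" "B ** A = mat 1" using left_inv_ex by blast
  have "\<forall>i j. \<exists>b. B$i$j = (if i = j then 1 else 0) + of_nat m * b"
  proof (intro allI)
    fix i j
    have "(B ** A)$i$j = (\<Sum>k\<in>UNIV. B$i$k * ((if k = j then 1 else 0) + of_nat m * x k j))"
      using x by (simp add: matrix_matrix_mult_def)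
    also have "\<dots> = (\<Sum>k\<in>UNIV. B$i$k * (if k = j then 1 else 0)) + of_nat m * (\<Sum>k\<in>UNIV. B$i$k * x k j)"
      by (simp add: ring_distribs sum.distrib sum_distrib_left mult.left_commute)
    also have "(\<Sum>k\<in>UNIV. B$i$k * (if k = j then 1 else 0)) = B$i$j"
      by (simp add: if_distrib[where f="\<lambda>z. _ * z"] cong: if_cong)
    finally have "B$i$j = (if i = j then 1 else 0) - of_nat m * (\<Sum>k\<in>UNIV. B$i$k * x k j)"
      using B(2) by (simp add: mat1_entry)
    then show "\<exists>b. B$i$j = (if i = j then 1 else 0) + of_nat m * b"
      by (intro exI[of _ "- (\<Sum>k\<in>UNIV. B$i$k * x k j)"]) simp
  qed
  then have "B \<in> carrier (congruence_subgroup m)" using B(1) unfolding Gamma_iff by blast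
  then show "\<exists>B\<in>carrier (congruence_subgroup m). B \<otimes>\<^bsub>congruence_subgroup m\<^esub> A = \<one>\<^bsub>congruence_subgroup m\<^esub>"
    using B(2) by auto
qed


lemma sl_simps:
  "carrier (sl_add_group S) = {M. (\<forall>i j. M i j \<in> carrier S) \<and> finsum S (\<lambda>i. M i i) UNIV = \<zero>\<^bsub>S\<^esub>}"
  "mult (sl_add_group S) = (\<lambda>M N i j. M i j \<oplus>\<^bsub>S\<^esub> N i j)"
  "one (sl_add_group S) = (\<lambda>i j. \<zero>\<^bsub>S\<^esub>)"
  by (simp_all add: sl_add_group_def)

lemma group_sl:
  assumes "abelian_group S"
  shows "group (sl_add_group S :: ('n::finite \<Rightarrow> 'n \<Rightarrow> 'b) monoid)"
proof -
  interpret abelian_group S by fact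
  show ?thesis
  proof (rule groupI)
    fix M N :: "'n \<Rightarrow> 'n \<Rightarrow> 'b"
    assume M: "M \<in> carrier (sl_add_group S)" and N: "N \<in> carrier (sl_add_group S)"
    have Mc: "\<And>i j. M i j \<in> carrier S" and Mt: "finsum S (\<lambda>i. M i i) UNIV = \<zero>\<^bsub>S\<^esub>" using M by (auto simp: sl_simps)
    have Nc: "\<And>i j. N i j \<in> carrier S" and Nt: "finsum S (\<lambda>i. N i i) UNIV = \<zero>\<^bsub>S\<^esub>" using N by (auto simp: sl_simps)
    have "finsum S (\<lambda>i. M i i \<oplus>\<^bsub>S\<^esub> N i i) UNIV = finsum S (\<lambda>i. M i i) UNIV \<oplus>\<^bsub>S\<^esub> finsum S (\<lambda>i. N i i) UNIV"
      by (rule finsum_addf) (auto simp: Mc Nc)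
    then show "M \<otimes>\<^bsub>sl_add_group S\<^esub> N \<in> carrier (sl_add_group S)"
      using Mc Nc Mt Nt by (simp add: sl_simps)
  next
    show "\<one>\<^bsub>sl_add_group S\<^esub> \<in> carrier (sl_add_group S :: ('n \<Rightarrow> 'n \<Rightarrow> 'b) monoid)"
      by (simp add: sl_simps)
  next
    fix M N K :: "'n \<Rightarrow> 'n \<Rightarrow> 'b"
    assume M: "M \<in> carrier (sl_add_group S)" and N: "N \<in> carrier (sl_add_group S)" and K: "K \<in> carrier (sl_add_group S)"
    then show "M \<otimes>\<^bsub>sl_add_group S\<^esub> N \<otimes>\<^bsub>sl_add_group S\<^esub> K = M \<otimes>\<^bsub>sl_add_group S\<^esub> (N \<otimes>\<^bsub>sl_add_group S\<^esub> K)"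
      by (simp add: sl_simps a_assoc fun_eq_iff)
  next
    fix M :: "'n \<Rightarrow> 'n \<Rightarrow> 'b"
    assume M: "M \<in> carrier (sl_add_group S)"
    then show "\<one>\<^bsub>sl_add_group S\<^esub> \<otimes>\<^bsub>sl_add_group S\<^esub> M = M"
      by (simp add: sl_simps fun_eq_iff)
  next
    fix M :: "'n \<Rightarrow> 'n \<Rightarrow> 'b"
    assume M: "M \<in> carrier (sl_add_group S)"
    have Mc: "\<And>i j. M i j \<in> carrier S" and Mt: "finsum S (\<lambda>i. M i i) UNIV = \<zero>\<^bsub>S\<^esub>" using M by (auto simp: sl_simps)
    define N where "N = (\<lambda>i j. \<ominus>\<^bsub>S\<^esub> M i j)"
    have Nc: "\<And>i j. N i j \<in> carrier S" by (simp add: N_def Mc)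
    have "finsum S (\<lambda>i. N i i \<oplus>\<^bsub>S\<^esub> M i i) UNIV = finsum S (\<lambda>i. N i i) UNIV \<oplus>\<^bsub>S\<^esub> finsum S (\<lambda>i. M i i) UNIV"
      by (rule finsum_addf) (auto simp: Mc Nc)
    moreover have "finsum S (\<lambda>i. N i i \<oplus>\<^bsub>S\<^esub> M i i) UNIV = finsum S (\<lambda>i::'n. \<zero>\<^bsub>S\<^esub>) UNIV"
    proof -
      have h: "(\<lambda>i. N i i \<oplus>\<^bsub>S\<^esub> M i i) = (\<lambda>i. \<zero>\<^bsub>S\<^esub>)" by (simp add: fun_eq_iff N_def Mc l_neg)
      show ?thesis by (simp only: h)
    qed
    ultimately have e: "finsum S (\<lambda>i. N i i) UNIV \<oplus>\<^bsub>S\<^esub> \<zero>\<^bsub>S\<^esub> = \<zero>\<^bsub>S\<^esub>" by (simp only: Mt finsum_zero)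
    have fc: "finsum S (\<lambda>i. N i i) UNIV \<in> carrier S" by (rule finsum_closed) (simp add: Nc)
    have "finsum S (\<lambda>i. N i i) UNIV = \<zero>\<^bsub>S\<^esub>" using e r_zero[OF fc] by simp
    then have "N \<in> carrier (sl_add_group S)" using Nc by (simp add: sl_simps)
    moreover have "N \<otimes>\<^bsub>sl_add_group S\<^esub> M = \<one>\<^bsub>sl_add_group S\<^esub>"
      by (simp add: sl_simps N_def Mc fun_eq_iff l_neg)
    ultimately show "\<exists>N\<in>carrier (sl_add_group S). N \<otimes>\<^bsub>sl_add_group S\<^esub> M = \<one>\<^bsub>sl_add_group S\<^esub>" by blast
  qed
qed


lemma prod_near_one:
  assumes "finite S"
  shows "(t*t::'a::comm_ring_1) dvd (prod (\<lambda>i. 1 + t * a i) S - 1 - t * sum a S)"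
  using assms
proof (induction S rule: finite_induct)
  case empty
  then show ?case by simp
next
  case (insert x F)
  then obtain c where c: "prod (\<lambda>i. 1 + t * a i) F - 1 - t * sum a F = t * t * c" by (auto simp: dvd_def)
  have P: "prod (\<lambda>i. 1 + t * a i) F = 1 + t * sum a F + t * t * c" using c by (simp add: algebra_simps)
  have "prod (\<lambda>i. 1 + t * a i) (insert x F) - 1 - t * sum a (insert x F)
        = (1 + t * a x) * (1 + t * sum a F + t * t * c) - 1 - t * (a x + sum a F)"
    using insert by (simp add: P)
  also have "\<dots> = t * t * (c + a x * sum a F + t * a x * c)" by (simp add: algebra_simps)
  finally show ?case by simp
qed

lemma perm_term_dvd:
  fixes x :: "'n::finite \<Rightarrow> 'n \<Rightarrow> 'a::comm_ring_1"
  assumes s: "s permutes (UNIV :: 'n set)" and ne: "s \<noteq> id"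
  shows "t * t dvd prod (\<lambda>i. (if i = s i then 1 else 0) + t * x i (s i)) UNIV"
proof -
  from ne obtain i where i: "s i \<noteq> i" by (auto simp: fun_eq_iff)
  define j where "j = s i"
  have "s j \<noteq> j"
  proof
    assume "s j = j"
    then have "s j = s i" by (simp add: j_def)
    then have "j = i" using permutes_inj[OF s] by (auto dest: injD)
    then show False using i j_def by simp
  qed
  have ij: "i \<noteq> j" using i j_def by simp
  let ?f = "\<lambda>i. (if i = s i then 1 else 0) + t * x i (s i)"
  have "prod ?f UNIV = ?f i * prod ?f (UNIV - {i})" by (rule prod.remove) auto
  also have "prod ?f (UNIV - {i}) = ?f j * prod ?f (UNIV - {i} - {j})" by (rule prod.remove) (use ij in auto)
  finally have "prod ?f UNIV = (t * x i (s i)) * ((t * x j (s j)) * prod ?f (UNIV - {i} - {j}))"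
    using i \<open>s j \<noteq> j\<close> by (simp add: eq_commute[of _ "s _"])
  then have "prod ?f UNIV = t * t * (x i (s i) * x j (s j) * prod ?f (UNIV - {i} - {j}))"
    by (simp add: algebra_simps)
  then show ?thesis by (rule dvdI)
qed

lemma det_near_id:
  fixes x :: "'n::finite \<Rightarrow> 'n \<Rightarrow> 'a::comm_ring_1"
  shows "t * t dvd (det ((\<chi> i j. (if i = j then 1 else 0) + t * x i j) :: 'a^'n^'n) - 1 - t * (\<Sum>i\<in>UNIV. x i i))"
proof -
  let ?A = "(\<chi> i j. (if i = j then 1 else 0) + t * x i j) :: 'a^'n^'n"
  let ?P = "{p. p permutes (UNIV :: 'n set)}"
  let ?g = "\<lambda>p. of_int (sign p) * prod (\<lambda>i. ?A$i$p i) (UNIV :: 'n set)"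
  have fin: "finite ?P" by (simp add: finite_permutations)
  have idP: "id \<in> ?P" by (simp add: permutes_id)
  have d1: "det ?A = ?g id + sum ?g (?P - {id})" unfolding det_def by (rule sum.remove[OF fin idP])
  have d2: "?g id = prod (\<lambda>i. 1 + t * x i i) UNIV" by (simp add: sign_id)
  have d3: "t * t dvd sum ?g (?P - {id})"
  proof (rule dvd_sum)
    fix p assume "p \<in> ?P - {id}"
    then have "p permutes (UNIV :: 'n set)" "p \<noteq> id" by auto
    from perm_term_dvd[OF this, of t x] have "t * t dvd prod (\<lambda>i. ?A$i$p i) UNIV"
      by (simp add: eq_commute[of "p _"])
    then show "t * t dvd ?g p" by (rule dvd_mult)
  qed
  have d4: "t * t dvd (prod (\<lambda>i. 1 + t * x i i) UNIV - 1 - t * (\<Sum>i\<in>UNIV. x i i))"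
    by (rule prod_near_one) simp
  have eq: "det ?A - 1 - t * (\<Sum>i\<in>UNIV. x i i) = (prod (\<lambda>i. 1 + t * x i i) UNIV - 1 - t * (\<Sum>i\<in>UNIV. x i i)) + sum ?g (?P - {id})"
    unfolding d1 d2 by (simp add: algebra_simps)
  show ?thesis unfolding eq by (rule dvd_add[OF d4 d3])
qed


lemma cls_eq: "of_nat p dvd (a - b) \<Longrightarrow> cls p a = cls p (b::'a::comm_ring_1)"
proof -
  assume d: "of_nat p dvd (a - b)"
  interpret cring "QR p :: 'a set ring" by (rule cring_QR)
  have "cls p a = cls p (b + (a - b))" by simp
  also have "\<dots> = cls p b \<oplus>\<^bsub>QR p\<^esub> cls p (a - b)" by (rule cls_add)
  also have "cls p (a - b) = \<zero>\<^bsub>QR p\<^esub>" using d by (simp add: cls_zero_iff)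
  finally show ?thesis by simp
qed

definition Xof :: "nat \<Rightarrow> 'a::comm_ring_1^'n::finite^'n \<Rightarrow> 'n \<Rightarrow> 'n \<Rightarrow> 'a" where
  "Xof m A = (\<lambda>i j. SOME y. A$i$j = (if i = j then 1 else 0) + of_nat m * y)"

definition phi :: "nat \<Rightarrow> nat \<Rightarrow> 'a::comm_ring_1^'n::finite^'n \<Rightarrow> 'n \<Rightarrow> 'n \<Rightarrow> 'a set" where
  "phi p m A = (\<lambda>i j. cls p (Xof m A i j))"

definition good :: "nat \<Rightarrow> nat \<Rightarrow> ('n::finite \<Rightarrow> 'n \<Rightarrow> 'a::comm_ring_1) \<Rightarrow> bool" where
  "good p r x \<longleftrightarrow> (\<exists>A \<in> carrier (congruence_subgroup (p^r) :: ('a^'n^'n) monoid). phi p (p^r) A = (\<lambda>i j. cls p (x i j)))"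

locale ctx =
  fixes V :: "'a::comm_ring_1 set" and p r :: nat
  assumes V: "free_Z_basis V" and pp: "prime p" and r: "r \<ge> 1"
begin

lemma p_pos: "p > 0" using pp by (simp add: prime_gt_0_nat)

lemma pr_pos: "p ^ r > 0" using p_pos by simp

lemma p_dvd_t: "(of_nat p :: 'a) dvd of_nat (p ^ r)"
proof -
  obtain k where "r = Suc k" using r by (cases r) auto
  then have "(of_nat (p ^ r) :: 'a) = of_nat p * of_nat (p ^ k)" by simp
  then show ?thesis by (rule dvdI)
qed

lemma Xof_eq:
  assumes "\<forall>i j. A$i$j = (if i = j then 1 else 0) + of_nat (p^r) * x i j"
  shows "Xof (p^r) (A::'a^'n::finite^'n) = x"
proof (rule ext, rule ext)
  fix i j
  let ?P = "\<lambda>y. A$i$j = (if i = j then 1 else 0) + of_nat (p^r) * y"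
  have "?P (x i j)" using assms by blast
  then have "?P (SOME y. ?P y)" by (rule someI)
  then have "of_nat (p^r) * (SOME y. ?P y) = of_nat (p^r) * x i j" using assms by simp
  then have "(SOME y. ?P y) = x i j" by (rule cancel_tf[OF V pr_pos])
  then show "Xof (p^r) A i j = x i j" by (simp add: Xof_def)
qed

lemma phi_eq:
  assumes "\<forall>i j. A$i$j = (if i = j then 1 else 0) + of_nat (p^r) * x i j"
  shows "phi p (p^r) (A::'a^'n::finite^'n) = (\<lambda>i j. cls p (x i j))"
  using Xof_eq[OF assms] by (simp add: phi_def)

lemma A_form:
  assumes "\<forall>i j. A$i$j = (if i = j then 1 else 0) + s * x i j"
  shows "A = ((\<chi> i j. (if i = j then 1 else 0) + s * x i j) :: 'a^'n::finite^'n)"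
  using assms by (simp add: vec_eq_iff)

lemma trace_dvd:
  assumes "\<forall>i j. A$i$j = (if i = j then 1 else 0) + of_nat (p^r) * x i j" and "det A = 1"
  shows "(of_nat p :: 'a) dvd (\<Sum>i\<in>UNIV. x i i)" (is "_ dvd ?tr")
proof -
  let ?t = "of_nat (p^r) :: 'a"
  have "?t * ?t dvd (det A - 1 - ?t * ?tr)"
    using det_near_id[of ?t x] A_form[OF assms(1)] by simp
  then obtain c where "det A - 1 - ?t * ?tr = ?t * ?t * c" by (auto simp: dvd_def)
  then have h: "- (?t * ?tr) = ?t * ?t * c" using assms(2) by simp
  have "?t * ?tr = - (- (?t * ?tr))" by simp
  also have "\<dots> = ?t * (- ?t * c)" unfolding h by simp
  finally have "?t * ?tr = ?t * (- ?t * c)" .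
  then have "?tr = - ?t * c" using cancel_tf[OF V pr_pos] by blast
  then have "?t dvd ?tr" by simp
  then show ?thesis using p_dvd_t dvd_trans by blast
qed

lemma phi_carrier:
  assumes "A \<in> carrier (congruence_subgroup (p^r) :: ('a^'n::finite^'n) monoid)"
  shows "phi p (p^r) A \<in> carrier (sl_add_group (QR p) :: ('n \<Rightarrow> 'n \<Rightarrow> 'a set) monoid)"
proof -
  obtain x where x: "\<forall>i k. A$i$k = (if i = k then 1 else 0) + of_nat (p^r) * x i k"
    using Gamma_obtain[OF assms] by blast
  have d: "det A = 1" using assms unfolding Gamma_iff by blast
  have "finsum (QR p) (\<lambda>i. cls p (x i i)) UNIV = cls p (\<Sum>i\<in>UNIV. x i i)"
    by (rule finsum_cls) simp
  also have "\<dots> = \<zero>\<^bsub>QR p\<^esub>" using trace_dvd[OF x d] by (simp add: cls_zero_iff)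
  finally show ?thesis by (simp add: phi_eq[OF x] sl_simps)
qed

lemma phi_mult:
  assumes A: "A \<in> carrier (congruence_subgroup (p^r) :: ('a^'n::finite^'n) monoid)"
      and B: "B \<in> carrier (congruence_subgroup (p^r) :: ('a^'n::finite^'n) monoid)"
  shows "phi p (p^r) (A ** B) = phi p (p^r) A \<otimes>\<^bsub>sl_add_group (QR p)\<^esub> phi p (p^r) B"
proof -
  obtain x where x: "\<forall>i k. A$i$k = (if i = k then 1 else 0) + of_nat (p^r) * x i k"
    using Gamma_obtain[OF A] by blast
  obtain y where y: "\<forall>i k. B$i$k = (if i = k then 1 else 0) + of_nat (p^r) * y i k"
    using Gamma_obtain[OF B] by blast
  let ?t = "of_nat (p^r) :: 'a"
  have AB: "\<forall>i j. (A ** B)$i$j = (if i = j then 1 else 0) + ?t * (x i j + y i j + ?t * (\<Sum>k\<in>UNIV. x i k * y k j))"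
    using prod_form[OF x y] by blast
  have "\<And>i j. cls p (x i j + y i j + ?t * (\<Sum>k\<in>UNIV. x i k * y k j)) = cls p (x i j + y i j)"
    by (rule cls_eq, simp only: add_diff_cancel_left', rule dvd_mult2[OF p_dvd_t])
  then show ?thesis
    by (simp add: phi_eq[OF AB] phi_eq[OF x] phi_eq[OF y] sl_simps cls_add)
qed

lemma phi_hom: "phi p (p^r) \<in> hom (congruence_subgroup (p^r) :: ('a^'n::finite^'n) monoid) (sl_add_group (QR p))"
  unfolding hom_def using phi_carrier phi_mult by auto

lemma one_sl: "\<one>\<^bsub>sl_add_group (QR p)\<^esub> = (\<lambda>i j. \<zero>\<^bsub>QR p\<^esub>)"
  by (simp add: sl_simps)

lemma phi_kernel:
  "kernel (congruence_subgroup (p^r) :: ('a^'n::finite^'n) monoid) (sl_add_group (QR p)) (phi p (p^r))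
   = carrier (congruence_subgroup (p^(r+1)))"
proof (rule Set.set_eqI, rule iffI)
  fix A :: "'a^'n^'n"
  assume "A \<in> kernel (congruence_subgroup (p^r)) (sl_add_group (QR p)) (phi p (p^r))"
  then have A: "A \<in> carrier (congruence_subgroup (p^r))" and k: "phi p (p^r) A = (\<lambda>i j. \<zero>\<^bsub>QR p\<^esub>)"
    by (auto simp: kernel_def one_sl)
  obtain x where x: "\<forall>i k. A$i$k = (if i = k then 1 else 0) + of_nat (p^r) * x i k"
    using Gamma_obtain[OF A] by blast
  have d: "det A = 1" using A unfolding Gamma_iff by blast
  have "\<forall>i j. (of_nat p :: 'a) dvd x i j"
  proof (intro allI)
    fix i j
    have "cls p (x i j) = \<zero>\<^bsub>QR p\<^esub>" using k phi_eq[OF x] by (simp add: fun_eq_iff)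
    then show "(of_nat p :: 'a) dvd x i j" by (simp add: cls_zero_iff)
  qed
  then have "\<forall>i j. \<exists>b. x i j = of_nat p * b" by (auto simp: dvd_def)
  from skol2[OF this] obtain b where b: "\<forall>i j. x i j = of_nat p * b i j" by blast
  have "\<forall>i j. A$i$j = (if i = j then 1 else 0) + of_nat (p^(r+1)) * b i j"
    using x b by (simp add: mult.assoc)
  then have "\<forall>i j. \<exists>b. A$i$j = (if i = j then 1 else 0) + of_nat (p^(r+1)) * b" by blast
  then show "A \<in> carrier (congruence_subgroup (p^(r+1)))" using d unfolding Gamma_iff by blast
next
  fix A :: "'a^'n^'n"
  assume A: "A \<in> carrier (congruence_subgroup (p^(r+1)))"
  obtain x where x: "\<forall>i k. A$i$k = (if i = k then 1 else 0) + of_nat (p^(r+1)) * x i k"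
    using Gamma_obtain[OF A] by blast
  have d: "det A = 1" using A unfolding Gamma_iff by blast
  have x': "\<forall>i k. A$i$k = (if i = k then 1 else 0) + of_nat (p^r) * (of_nat p * x i k)"
    using x by (simp add: mult.assoc)
  then have "\<forall>i j. \<exists>b. A$i$j = (if i = j then 1 else 0) + of_nat (p^r) * b" by blast
  then have AG: "A \<in> carrier (congruence_subgroup (p^r))" using d unfolding Gamma_iff by blast
  have "phi p (p^r) A = (\<lambda>i j. \<zero>\<^bsub>QR p\<^esub>)"
    unfolding phi_eq[OF x'] by (simp add: fun_eq_iff cls_zero_iff del: of_nat_mult)
  then show "A \<in> kernel (congruence_subgroup (p^r)) (sl_add_group (QR p)) (phi p (p^r))"
    using AG by (simp add: kernel_def one_sl)
qed

lemma good_mk: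
  assumes "\<forall>i j. A$i$j = (if i = j then 1 else 0) + of_nat (p^r) * x i j" and "det A = 1"
  shows "good p r (x :: 'n::finite \<Rightarrow> 'n \<Rightarrow> 'a)"
proof -
  have "\<forall>i j. \<exists>b. A$i$j = (if i = j then 1 else 0) + of_nat (p^r) * b" using assms(1) by blast
  then have "A \<in> carrier (congruence_subgroup (p^r))" using assms(2) unfolding Gamma_iff by blast
  then show ?thesis unfolding good_def using phi_eq[OF assms(1)] by blast
qed

lemma good_zero: "good p r (\<lambda>i j. 0 :: 'a) "
  by (rule good_mk[where A = "mat 1"]) (simp_all add: mat1_entry)

lemma good_cong:
  assumes "good p r (x :: 'n::finite \<Rightarrow> 'n \<Rightarrow> 'a)" and "\<And>i j. (of_nat p :: 'a) dvd (y i j - x i j)"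
  shows "good p r y"
proof -
  have "(\<lambda>i j. cls p (x i j)) = (\<lambda>i j. cls p (y i j))"
    using assms(2) by (intro ext) (metis cls_eq)
  then show ?thesis using assms(1) unfolding good_def by simp
qed

lemma good_dvd: "(\<And>i j. (of_nat p :: 'a) dvd y i j) \<Longrightarrow> good p r (y :: 'n::finite \<Rightarrow> 'n \<Rightarrow> 'a)"
  by (rule good_cong[OF good_zero]) simp

lemma good_eq: "good p r x \<Longrightarrow> x = y \<Longrightarrow> good p r y" by simp

lemma good_add:
  assumes "good p r (x :: 'n::finite \<Rightarrow> 'n \<Rightarrow> 'a)" and "good p r y"
  shows "good p r (\<lambda>i j. x i j + y i j)"
proof -
  obtain A where A: "A \<in> carrier (congruence_subgroup (p^r) :: ('a^'n^'n) monoid)" "phi p (p^r) A = (\<lambda>i j. cls p (x i j))"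
    using assms(1) unfolding good_def by blast
  obtain B where B: "B \<in> carrier (congruence_subgroup (p^r) :: ('a^'n^'n) monoid)" "phi p (p^r) B = (\<lambda>i j. cls p (y i j))"
    using assms(2) unfolding good_def by blast
  interpret G: group "congruence_subgroup (p^r) :: ('a^'n^'n) monoid" by (rule group_Gamma)
  have AB: "A ** B \<in> carrier (congruence_subgroup (p^r) :: ('a^'n^'n) monoid)"
    using G.m_closed[OF A(1) B(1)] by simp
  have "phi p (p^r) (A ** B) = (\<lambda>i j. cls p (x i j + y i j))"
    using phi_mult[OF A(1) B(1)] A(2) B(2) by (simp add: sl_simps cls_add)
  then show ?thesis unfolding good_def using AB by blast
qed

lemma good_sum:
  assumes "finite S" and "\<And>s. s \<in> S \<Longrightarrow> good p r (f s :: 'n::finite \<Rightarrow> 'n \<Rightarrow> 'a)"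
  shows "good p r (\<lambda>i j. \<Sum>s\<in>S. f s i j)"
  using assms
proof (induction S rule: finite_induct)
  case empty
  then show ?case using good_zero by simp
next
  case (insert s F)
  have "good p r (\<lambda>i j. f s i j + (\<Sum>s\<in>F. f s i j))"
    by (rule good_add) (use insert in auto)
  then show ?case using insert by simp
qed

lemma good_elem:
  fixes i j :: "'n::finite"
  assumes ij: "i \<noteq> j"
  shows "good p r (\<lambda>a b. if a = i \<and> b = j then c else 0 :: 'a)"
proof -
  let ?t = "of_nat (p^r) :: 'a"
  define A where "A = ((\<chi> k. if k = i then row i (mat 1) + (?t * c) *s row j (mat 1) else row k (mat 1)) :: 'a^'n^'n)"
  have "det A = det (mat 1 :: 'a^'n^'n)" unfolding A_def by (rule det_row_operation[OF ij])
  then have d: "det A = 1" by simp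
  have "\<forall>a b. A$a$b = (if a = b then 1 else 0) + ?t * (if a = i \<and> b = j then c else 0)"
    by (simp add: A_def row_def mat1_entry)
  then show ?thesis using d by (rule good_mk)
qed

lemma good_diag:
  fixes i j :: "'n::finite"
  assumes ij: "i \<noteq> j"
  shows "good p r (\<lambda>a b. c * ((if a = i \<and> b = i then 1 else 0) - (if a = j \<and> b = j then 1 else 0)
          + (if a = i \<and> b = j then 1 else 0) - (if a = j \<and> b = i then 1 else 0)) :: 'a)"
    (is "good p r ?x")
proof -
  let ?t = "of_nat (p^r) :: 'a"
  define A where "A = ((\<chi> a b. (if a = b then 1 else 0) + ?t * ?x a b) :: 'a^'n^'n)"
  define A1 where "A1 = ((\<chi> k. if k = i then row i A + 1 *s row j A else row k A) :: 'a^'n^'n)"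
  define A2 where "A2 = ((\<chi> k. if k = j then row j A1 + (?t * c) *s row i A1 else row k A1) :: 'a^'n^'n)"
  define A3 where "A3 = ((\<chi> k. if k = i then row i A2 + (-1) *s row j A2 else row k A2) :: 'a^'n^'n)"
  have "det A1 = det A" unfolding A1_def by (rule det_row_operation[OF ij])
  moreover have "det A2 = det A1" unfolding A2_def by (rule det_row_operation) (use ij in auto)
  moreover have "det A3 = det A2" unfolding A3_def by (rule det_row_operation[OF ij])
  moreover have "A3 = mat 1"
    using ij by (auto simp: vec_eq_iff A3_def A2_def A1_def A_def row_def mat1_entry algebra_simps)
  ultimately have d: "det A = 1" by simp
  have "\<forall>a b. A$a$b = (if a = b then 1 else 0) + ?t * ?x a b" by (simp add: A_def)
  then show ?thesis using d by (rule good_mk)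
qed

lemma good_all:
  fixes x :: "'n::finite \<Rightarrow> 'n \<Rightarrow> 'a"
  assumes tr: "(of_nat p :: 'a) dvd (\<Sum>i\<in>UNIV. x i i)"
  shows "good p r x"
proof -
  define i0 :: 'n where "i0 = undefined"
  define P where "P = {s :: 'n \<times> 'n. fst s \<noteq> snd s}"
  define off where "off = (\<lambda>a b. \<Sum>s\<in>P. (if a = fst s \<and> b = snd s then x (fst s) (snd s) else 0))"
  define F where "F = (\<lambda>c a b. x c c * ((if a = c \<and> b = c then 1 else 0) - (if a = i0 \<and> b = i0 then 1 else 0)))"
  define diag where "diag = (\<lambda>a b. \<Sum>c\<in>UNIV. F c a b)"
  have fP: "finite P" by simp
  have g1: "good p r off" unfolding off_def
    by (rule good_sum[OF fP]) (rule good_elem, simp add: P_def)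
  have gF: "good p r (F c)" for c
  proof (cases "c = i0")
    case True
    then show ?thesis using good_zero by (simp add: F_def)
  next
    case False
    have "good p r (\<lambda>a b. (x c c * ((if a = c \<and> b = c then 1 else 0) - (if a = i0 \<and> b = i0 then 1 else 0)
          + (if a = c \<and> b = i0 then 1 else 0) - (if a = i0 \<and> b = c then 1 else 0))
          + (if a = c \<and> b = i0 then - x c c else 0)) + (if a = i0 \<and> b = c then x c c else 0))"
      by (intro good_add good_diag good_elem False) (use False in auto)
    then show ?thesis by (rule good_eq) (use False in \<open>auto simp: F_def fun_eq_iff algebra_simps\<close>)
  qed
  have g2: "good p r diag" unfolding diag_def by (rule good_sum) (simp_all add: gF)
  have g3: "good p r (\<lambda>a b. off a b + diag a b)" by (rule good_add[OF g1 g2])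
  have offv: "off a b = (if a \<noteq> b then x a b else 0)" for a b
  proof -
    have "off a b = (\<Sum>s\<in>P. (if s = (a, b) then x a b else 0))"
      unfolding off_def by (rule sum.cong) auto
    also have "\<dots> = (if (a, b) \<in> P then x a b else 0)" by (simp add: sum.delta fP)
    finally show ?thesis by (simp add: P_def)
  qed
  have diagv: "diag a b = (if a = b then x a a else 0) - (if a = i0 \<and> b = i0 then (\<Sum>i\<in>UNIV. x i i) else 0)" for a b
  proof -
    have e1: "F c a b = (if c = a \<and> b = c then x c c else 0) - x c c * (if a = i0 \<and> b = i0 then 1 else 0)" for c
      by (auto simp: F_def algebra_simps)
    have "diag a b = (\<Sum>c\<in>UNIV. (if c = a \<and> b = c then x c c else 0)) - (\<Sum>c\<in>UNIV. x c c) * (if a = i0 \<and> b = i0 then 1 else 0)"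
      unfolding diag_def e1 by (simp add: sum_subtractf sum_distrib_right)
    also have "(\<Sum>c\<in>UNIV. (if c = a \<and> b = c then x c c else 0)) = (if a = b then x a a else 0)"
    proof (cases "a = b")
      case True
      then show ?thesis by (simp add: eq_commute[of b])
    next
      case False
      then show ?thesis by (auto intro!: sum.neutral)
    qed
    also have "(\<Sum>c\<in>UNIV. x c c) * (if a = i0 \<and> b = i0 then 1 else 0) = (if a = i0 \<and> b = i0 then (\<Sum>i\<in>UNIV. x i i) else 0)"
      by simp
    finally show ?thesis .
  qed
  show ?thesis
  proof (rule good_cong[OF g3])
    fix a b
    have "x a b - (off a b + diag a b) = (if a = i0 \<and> b = i0 then (\<Sum>i\<in>UNIV. x i i) else 0)"
      by (simp add: offv diagv)
    then show "(of_nat p :: 'a) dvd x a b - (off a b + diag a b)" using tr by simp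
  qed
qed

lemma phi_surj:
  "phi p (p^r) ` carrier (congruence_subgroup (p^r) :: ('a^'n::finite^'n) monoid) = carrier (sl_add_group (QR p))"
proof (rule Set.set_eqI, rule iffI)
  fix M assume "M \<in> phi p (p^r) ` carrier (congruence_subgroup (p^r) :: ('a^'n::finite^'n) monoid)"
  then show "M \<in> carrier (sl_add_group (QR p))" using phi_carrier by blast
next
  fix M :: "'n \<Rightarrow> 'n \<Rightarrow> 'a set"
  assume M: "M \<in> carrier (sl_add_group (QR p))"
  then have "\<forall>i j. M i j \<in> range (cls p)" by (auto simp: sl_simps carrier_QR)
  then have "\<forall>i j. \<exists>y. M i j = cls p y" by blast
  from skol2[OF this] obtain x where x: "\<forall>i j. M i j = cls p (x i j)" by blast
  have "cls p (\<Sum>i\<in>UNIV. x i i) = finsum (QR p) (\<lambda>i. cls p (x i i)) UNIV"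
    by (rule finsum_cls[symmetric]) simp
  also have "\<dots> = finsum (QR p) (\<lambda>i. M i i) UNIV" using x by simp
  also have "\<dots> = \<zero>\<^bsub>QR p\<^esub>" using M by (simp add: sl_simps)
  finally have "(of_nat p :: 'a) dvd (\<Sum>i\<in>UNIV. x i i)" by (simp add: cls_zero_iff)
  then have "good p r x" by (rule good_all)
  then obtain A where "A \<in> carrier (congruence_subgroup (p^r) :: ('a^'n^'n) monoid)" "phi p (p^r) A = (\<lambda>i j. cls p (x i j))"
    unfolding good_def by blast
  moreover have "M = (\<lambda>i j. cls p (x i j))" using x by (simp add: fun_eq_iff)
  ultimately have "M = phi p (p^r) A" "A \<in> carrier (congruence_subgroup (p^r) :: ('a^'n^'n) monoid)" by simp_all
  then show "M \<in> phi p (p^r) ` carrier (congruence_subgroup (p^r) :: ('a^'n^'n) monoid)" by (rule image_eqI)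
qed

end

theorem theorem3p2:
  fixes V :: "'a::comm_ring_1 set" and p r :: nat
  assumes "free_Z_basis V"
    and "prime p"
    and "CARD('n::finite) \<ge> 2"
    and "r \<ge> 1"
  shows "\<exists>\<phi>. \<phi> \<in> epi (congruence_subgroup (p ^ r) :: ('a^'n^'n) monoid)
                    (sl_add_group (mod_p_ring p :: 'a set ring) :: ('n \<Rightarrow> 'n \<Rightarrow> 'a set) monoid)
          \<and> kernel (congruence_subgroup (p ^ r)) (sl_add_group (mod_p_ring p)) \<phi>
              = carrier (congruence_subgroup (p ^ (r + 1)))
          \<and> (congruence_subgroup (p ^ r) :: ('a^'n^'n) monoid)
              Mod carrier (congruence_subgroup (p ^ (r + 1)))
            \<cong> (sl_add_group (mod_p_ring p :: 'a set ring) :: ('n \<Rightarrow> 'n \<Rightarrow> 'a set) monoid)"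
proof -
  interpret ctx V p r using assms(1,2,4) by (rule ctx.intro)
  have H: "(sl_add_group (mod_p_ring p :: 'a set ring) :: ('n \<Rightarrow> 'n \<Rightarrow> 'a set) monoid) = sl_add_group (QR p)"
    by (simp add: mod_p_ring_eq)
  have hom: "phi p (p^r) \<in> hom (congruence_subgroup (p ^ r) :: ('a^'n^'n) monoid) (sl_add_group (QR p))"
    by (rule phi_hom)
  have surj: "phi p (p^r) ` carrier (congruence_subgroup (p ^ r) :: ('a^'n^'n) monoid) = carrier (sl_add_group (QR p))"
    by (rule phi_surj)
  have ker: "kernel (congruence_subgroup (p ^ r) :: ('a^'n^'n) monoid) (sl_add_group (QR p)) (phi p (p^r))
      = carrier (congruence_subgroup (p ^ (r + 1)))" by (rule phi_kernel)
  have abQ: "abelian_group (QR p :: 'a set ring)"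
  proof -
    interpret cring "QR p :: 'a set ring" by (rule cring_QR)
    show ?thesis by (rule is_abelian_group)
  qed
  have gh: "group_hom (congruence_subgroup (p ^ r) :: ('a^'n^'n) monoid) (sl_add_group (QR p) :: ('n \<Rightarrow> 'n \<Rightarrow> 'a set) monoid) (phi p (p^r))"
    by (intro group_hom.intro group_hom_axioms.intro group_Gamma group_sl abQ hom)
  have iso: "(congruence_subgroup (p ^ r) :: ('a^'n^'n) monoid) Mod carrier (congruence_subgroup (p ^ (r + 1)))
      \<cong> (sl_add_group (QR p) :: ('n \<Rightarrow> 'n \<Rightarrow> 'a set) monoid)"
    using group_hom.FactGroup_iso[OF gh surj] unfolding ker .
  show ?thesis unfolding H
    using hom surj ker iso by (auto simp: epi_def)
qed

end
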